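(* Let $\mathbb{A}$ be a non-empty set and $\varphi:\mathbb{A}^+\to C$ a finite coloring. Then every periodic word $x=u^\omega$ with $u\in\mathbb{A}^+$ admits a shift invariant $\varphi$-ultra monochromatic factorization.
   Context: $T$ is the shift, $T(x_0x_1\cdots)=x_1x_2\cdots$. A factorization $z=V_0V_1V_2\cdots$ with all $V_i\in\mathbb{A}^+$ is $\varphi$-ultra monochromatic if there is $c\in C$ such that for all $k\ge1$, all $0\le n_1<\cdots<n_k$ and all permutations $\sigma$ of $\{1,\dots,k\}$, $\varphi(V_{n_{\sigma(1)}}\cdots V_{n_{\sigma(k)}})=c$. It is shift invariant if for every positive integer $j$ the induced factorization $T^j(z)=W_0W_1W_2\cdots$ with $|W_i|=|V_i|$ for all $i$ is also $\varphi$-ultra monochromatic (the color may depend on $j$). *)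

theory Defs
  imports Main "HOL-Library.Multiset"
begin

text \<open>Infinite words are functions nat => 'a; finite words are lists.
  A^+ is the set of nonempty lists with letters in A.\<close>

definition plus_words :: "'a set \<Rightarrow> 'a list set" where
  "plus_words A = {w. w \<noteq> [] \<and> set w \<subseteq> A}"

definition shift :: "nat \<Rightarrow> (nat \<Rightarrow> 'a) \<Rightarrow> (nat \<Rightarrow> 'a)" where
  "shift j z = (\<lambda>n. z (n + j))"

definition omega_pow :: "'a list \<Rightarrow> (nat \<Rightarrow> 'a)" where
  "omega_pow u = (\<lambda>n. u ! (n mod length u))"

definition starts :: "(nat \<Rightarrow> 'a list) \<Rightarrow> nat \<Rightarrow> nat" where
  "starts V i = (\<Sum>m<i. length (V m))"

definition is_factorization :: "'a set \<Rightarrow> (nat \<Rightarrow> 'a) \<Rightarrow> (nat \<Rightarrow> 'a list) \<Rightarrow> bool" where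
  "is_factorization A z V \<longleftrightarrow>
     (\<forall>i. V i \<in> plus_words A) \<and>
     (\<forall>i k. k < length (V i) \<longrightarrow> z (starts V i + k) = V i ! k)"

text \<open>phi-ultra monochromatic: a colour c in C such that for all k >= 1, all
  n_1 < ... < n_k and all permutations, phi(V_{n_sigma(1)} ... V_{n_sigma(k)}) = c.
  Here ns = [n_1,...,n_k] and the permuted index lists are the lists ms with mset ms = mset ns.\<close>
definition ultra_mono :: "('a list \<Rightarrow> 'c) \<Rightarrow> 'c set \<Rightarrow> (nat \<Rightarrow> 'a list) \<Rightarrow> bool" where
  "ultra_mono \<phi> C V \<longleftrightarrow>
     (\<exists>c\<in>C. \<forall>ns. ns \<noteq> [] \<longrightarrow> sorted_wrt (<) ns \<longrightarrow>
        (\<forall>ms. mset ms = mset ns \<longrightarrow> \<phi> (concat (map V ms)) = c))"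

definition induced_fact :: "(nat \<Rightarrow> 'a list) \<Rightarrow> nat \<Rightarrow> (nat \<Rightarrow> 'a) \<Rightarrow> (nat \<Rightarrow> 'a list)" where
  "induced_fact V j z = (\<lambda>i. map (\<lambda>k. shift j z (starts V i + k)) [0..<length (V i)])"

definition shift_invariant :: "('a list \<Rightarrow> 'c) \<Rightarrow> 'c set \<Rightarrow> (nat \<Rightarrow> 'a) \<Rightarrow> (nat \<Rightarrow> 'a list) \<Rightarrow> bool" where
  "shift_invariant \<phi> C z V \<longleftrightarrow> (\<forall>j\<ge>1. ultra_mono \<phi> C (induced_fact V j z))"

end

theory Submission
  imports Defs
begin


definition ult :: "nat set set \<Rightarrow> bool" where
  "ult U \<longleftrightarrow> UNIV \<in> U \<and> {} \<notin> U \<and> (\<forall>A B. A \<in> U \<longrightarrow> A \<subseteq> B \<longrightarrow> B \<in> U)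
     \<and> (\<forall>A B. A \<in> U \<longrightarrow> B \<in> U \<longrightarrow> A \<inter> B \<in> U) \<and> (\<forall>A. A \<in> U \<or> - A \<in> U)"

definition fip :: "nat set set \<Rightarrow> bool" where
  "fip G \<longleftrightarrow> (\<forall>H. finite H \<longrightarrow> H \<subseteq> G \<longrightarrow> \<Inter>H \<noteq> {})"

lemma ult_Inter:
  assumes "ult U" "finite H" "H \<subseteq> U" shows "\<Inter>H \<in> U"
  using assms(2,3)
proof (induction H rule: finite_induct)
  case empty then show ?case using assms(1) by (simp add: ult_def)
next
  case (insert x F) then show ?case using assms(1) unfolding ult_def by auto
qed

lemma ult_fip: "ult U \<Longrightarrow> fip U"
  unfolding fip_def by (metis ult_Inter ult_def)

lemma fip_mono: "fip G \<Longrightarrow> G' \<subseteq> G \<Longrightarrow> fip G'"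
  unfolding fip_def by blast

lemma fip_insert: "fip (insert B G) \<longleftrightarrow> (\<forall>H. finite H \<longrightarrow> H \<subseteq> G \<longrightarrow> B \<inter> \<Inter>H \<noteq> {})"
  unfolding fip_def
proof (intro iffI allI impI)
  fix H assume a: "\<forall>H. finite H \<longrightarrow> H \<subseteq> insert B G \<longrightarrow> \<Inter> H \<noteq> {}" "finite H" "H \<subseteq> G"
  then show "B \<inter> \<Inter> H \<noteq> {}" using a(1)[rule_format, of "insert B H"] by auto
next
  fix H assume a: "\<forall>H. finite H \<longrightarrow> H \<subseteq> G \<longrightarrow> B \<inter> \<Inter> H \<noteq> {}" "finite H" "H \<subseteq> insert B G"
  then have "H - {B} \<subseteq> G" "finite (H - {B})" by auto
  from a(1)[rule_format, OF this(2,1)] have ne: "B \<inter> \<Inter> (H - {B}) \<noteq> {}" .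
  show "\<Inter> H \<noteq> {}"
  proof (cases "B \<in> H")
    case True
    then have "H = insert B (H - {B})" by auto
    then have "\<Inter>H = B \<inter> \<Inter> (H - {B})" by (metis Inter_insert)
    then show ?thesis using ne by simp
  next
    case False
    then have "H - {B} = H" by auto
    then show ?thesis using ne by auto
  qed
qed

lemma fip_max_ult:
  assumes f: "fip G" and mx: "\<forall>X. fip X \<longrightarrow> G \<subseteq> X \<longrightarrow> X = G"
  shows "ult G"
proof -
  have ins: "B \<in> G" if "fip (insert B G)" for B using mx that by blast
  have "UNIV \<in> G" by (rule ins) (unfold fip_insert, use f in \<open>simp add: fip_def\<close>)
  moreover have "{} \<notin> G"
  proof
    assume "{} \<in> G"
    then have "finite {{}}" "{{}} \<subseteq> G" by auto
    with f have "\<Inter>{{}} \<noteq> ({}::nat set)" unfolding fip_def by blast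
    then show False by simp
  qed
  moreover have "B \<in> G" if "A \<in> G" "A \<subseteq> B" for A B
  proof (rule ins)
    show "fip (insert B G)" unfolding fip_insert
    proof (intro allI impI)
      fix H assume "finite H" "H \<subseteq> G"
      then have "\<Inter>(insert A H) \<noteq> {}" using f that unfolding fip_def by auto
      then show "B \<inter> \<Inter> H \<noteq> {}" using that by auto
    qed
  qed
  moreover have "A \<inter> B \<in> G" if "A \<in> G" "B \<in> G" for A B
  proof (rule ins)
    show "fip (insert (A \<inter> B) G)" unfolding fip_insert
    proof (intro allI impI)
      fix H assume "finite H" "H \<subseteq> G"
      then have "finite (insert A (insert B H))" "insert A (insert B H) \<subseteq> G" using that by auto
      then have "\<Inter>(insert A (insert B H)) \<noteq> {}" using f unfolding fip_def by blast
      then show "A \<inter> B \<inter> \<Inter> H \<noteq> {}" by auto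
    qed
  qed
  moreover have "A \<in> G \<or> - A \<in> G" for A
  proof (rule ccontr)
    assume "\<not> (A \<in> G \<or> - A \<in> G)"
    then have "\<not> fip (insert A G)" "\<not> fip (insert (-A) G)" using ins by blast+
    then obtain H1 H2 where h: "finite H1" "H1 \<subseteq> G" "A \<inter> \<Inter>H1 = {}"
       "finite H2" "H2 \<subseteq> G" "-A \<inter> \<Inter>H2 = {}" unfolding fip_insert by blast
    then have "\<Inter>(H1 \<union> H2) = {}" by blast
    with f h show False unfolding fip_def by blast
  qed
  ultimately show ?thesis unfolding ult_def by blast
qed

lemma fip_extend:
  assumes "fip F" shows "\<exists>U. ult U \<and> F \<subseteq> U"
proof -
  let ?A = "{G. F \<subseteq> G \<and> fip G}"
  have "\<exists>U\<in>?A. \<forall>X\<in>C. X \<subseteq> U" if C: "C \<in> chains ?A" for C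
  proof (cases "C = {}")
    case True then show ?thesis using assms by auto
  next
    case False
    have ch: "subset.chain ?A C" using C unfolding chains_alt_def by auto
    have "fip (\<Union>C)" unfolding fip_def
    proof (intro allI impI)
      fix H assume "finite H" "H \<subseteq> \<Union>C"
      then obtain B where "B \<in> C" "H \<subseteq> B" using finite_subset_Union_chain[OF _ _ False ch] by metis
      then show "\<Inter>H \<noteq> {}" using C \<open>finite H\<close> unfolding chains_def fip_def by auto
    qed
    moreover have "F \<subseteq> \<Union>C" using False C unfolding chains_def by auto
    ultimately show ?thesis by auto
  qed
  then obtain M where M: "M \<in> ?A" "\<forall>X\<in>?A. M \<subseteq> X \<longrightarrow> X = M" using Zorn_Lemma2[of ?A] by blast
  have "ult M" by (rule fip_max_ult) (use M in auto)
  then show ?thesis using M by auto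
qed



definition sh :: "nat set \<Rightarrow> nat \<Rightarrow> nat set" where "sh A n = {m. m + n \<in> A}"
definition uplus :: "nat set set \<Rightarrow> nat set set \<Rightarrow> nat set set" where
  "uplus q p = {A. {n. sh A n \<in> p} \<in> q}"

definition cl :: "nat set set set \<Rightarrow> bool" where
  "cl K \<longleftrightarrow> (\<forall>q\<in>K. ult q) \<and> (\<forall>r. ult r \<longrightarrow> (\<forall>A\<in>r. \<exists>q\<in>K. A \<in> q) \<longrightarrow> r \<in> K)"

lemma ultD:
  assumes "ult U"
  shows "UNIV \<in> U" "{} \<notin> U" "A \<in> U \<Longrightarrow> A \<subseteq> B \<Longrightarrow> B \<in> U"
    "A \<in> U \<Longrightarrow> B \<in> U \<Longrightarrow> A \<inter> B \<in> U" "A \<in> U \<or> - A \<in> U"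
  using assms unfolding ult_def by blast+

lemma ult_compl: assumes "ult U" shows "(- A \<in> U) \<longleftrightarrow> A \<notin> U"
proof
  assume "-A \<in> U" show "A \<notin> U"
  proof
    assume "A \<in> U" with \<open>-A \<in> U\<close> have "A \<inter> -A \<in> U" using ultD(4)[OF assms] by blast
    then show False using ultD(2)[OF assms] by simp
  qed
next
  assume "A \<notin> U" then show "-A \<in> U" using ultD(5)[OF assms] by blast
qed

lemma ult_int: "ult U \<Longrightarrow> (A \<inter> B \<in> U) \<longleftrightarrow> A \<in> U \<and> B \<in> U"
  using ultD(3)[of U "A \<inter> B" A] ultD(3)[of U "A \<inter> B" B] ultD(4)[of U A B] by blast

lemma ult_sub_eq: assumes "ult U" "ult V" "U \<subseteq> V" shows "U = V"
proof (rule subset_antisym[OF assms(3)], rule subsetI)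
  fix x assume "x \<in> V"
  show "x \<in> U"
  proof (rule ccontr)
    assume "x \<notin> U"
    then have "-x \<in> U" using ult_compl[OF assms(1), of x] by blast
    then have "-x \<in> V" using assms(3) by blast
    then show False using \<open>x \<in> V\<close> ult_compl[OF assms(2)] by blast
  qed
qed

lemma uplus_ult: assumes "ult q" "ult p" shows "ult (uplus q p)"
proof -
  have c: "{n. sh (-A) n \<in> p} = - {n. sh A n \<in> p}" for A
  proof -
    have e: "sh (-A) n = - sh A n" for n by (auto simp: sh_def)
    show ?thesis unfolding e using ult_compl[OF assms(2)] by blast
  qed
  have i: "{n. sh (A \<inter> B) n \<in> p} = {n. sh A n \<in> p} \<inter> {n. sh B n \<in> p}" for A B
  proof -
    have e: "sh (A \<inter> B) n = sh A n \<inter> sh B n" for n by (auto simp: sh_def)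
    show ?thesis unfolding e using ult_int[OF assms(2)] by blast
  qed
  have m: "A \<in> uplus q p \<longleftrightarrow> {n. sh A n \<in> p} \<in> q" for A unfolding uplus_def by simp
  have "UNIV \<in> uplus q p" unfolding m using assms by (simp add: sh_def ultD)
  moreover have "{} \<notin> uplus q p" unfolding m using assms by (simp add: sh_def ultD)
  moreover have "B \<in> uplus q p" if "A \<in> uplus q p" "A \<subseteq> B" for A B
  proof -
    have "{n. sh A n \<in> p} \<subseteq> {n. sh B n \<in> p}"
    proof
      fix n assume "n \<in> {n. sh A n \<in> p}"
      moreover have "sh A n \<subseteq> sh B n" using \<open>A \<subseteq> B\<close> unfolding sh_def by auto
      ultimately show "n \<in> {n. sh B n \<in> p}" using ultD(3)[OF assms(2)] by blast
    qed
    then show ?thesis using that(1) ultD(3)[OF assms(1)] unfolding m by blast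
  qed
  moreover have "A \<inter> B \<in> uplus q p" if "A \<in> uplus q p" "B \<in> uplus q p" for A B
    using that ultD(4)[OF assms(1)] unfolding m i by blast
  moreover have "A \<in> uplus q p \<or> - A \<in> uplus q p" for A
    unfolding m c using ultD(5)[OF assms(1)] by blast
  ultimately show ?thesis unfolding ult_def by blast
qed

lemma uplus_assoc: "uplus (uplus p q) r = uplus p (uplus q r)"
proof -
  have "sh {n. sh A n \<in> r} m = {n. sh (sh A m) n \<in> r}" for A m
    by (simp add: sh_def ac_simps)
  then show ?thesis unfolding uplus_def by simp
qed

lemma compact:
  assumes cK: "\<forall>K\<in>KK. cl K"
    and fK: "\<forall>GG. finite GG \<longrightarrow> GG \<subseteq> KK \<longrightarrow> GG \<noteq> {} \<longrightarrow> \<Inter>GG \<noteq> {}"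
  shows "\<exists>U. ult U \<and> (\<forall>K\<in>KK. U \<in> K)"
proof -
  define F where "F = {A. \<exists>K\<in>KK. \<forall>q\<in>K. A \<in> q}"
  have "fip F" unfolding fip_def
  proof (intro allI impI)
    fix H assume H: "finite H" "H \<subseteq> F"
    show "\<Inter>H \<noteq> {}"
    proof (cases "H = {}")
      case True then show ?thesis by simp
    next
      case False
      have "\<forall>A\<in>H. \<exists>K. K \<in> KK \<and> (\<forall>q\<in>K. A \<in> q)"
      proof
        fix A assume "A \<in> H" then have "A \<in> F" using H(2) by blast
        then show "\<exists>K. K \<in> KK \<and> (\<forall>q\<in>K. A \<in> q)" unfolding F_def by blast
      qed
      then have "\<exists>k. \<forall>A\<in>H. k A \<in> KK \<and> (\<forall>q\<in>k A. A \<in> q)" by (rule bchoice)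
      then obtain k where k: "\<And>A. A \<in> H \<Longrightarrow> k A \<in> KK" "\<And>A q. A \<in> H \<Longrightarrow> q \<in> k A \<Longrightarrow> A \<in> q" by blast
      have "finite (k ` H)" "k ` H \<subseteq> KK" "k ` H \<noteq> {}" using k(1) H False by auto
      then have "\<Inter>(k ` H) \<noteq> {}" by (rule fK[rule_format])
      then obtain q where q: "\<And>A. A \<in> H \<Longrightarrow> q \<in> k A" by auto
      obtain A0 where "A0 \<in> H" using False by auto
      have "cl (k A0)" using cK k(1)[OF \<open>A0 \<in> H\<close>] by blast
      then have "ult q" using q[OF \<open>A0 \<in> H\<close>] unfolding cl_def by blast
      moreover have "H \<subseteq> q" using q k(2) by blast
      ultimately have "\<Inter>H \<in> q" using ult_Inter H(1) by blast
      then show ?thesis using \<open>ult q\<close> ultD(2) by metis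
    qed
  qed
  then obtain U where U: "ult U" "F \<subseteq> U" using fip_extend by blast
  have "U \<in> K" if KK: "K \<in> KK" for K
  proof -
    have clK: "cl K" using cK KK by blast
    have "\<exists>q\<in>K. A \<in> q" if "A \<in> U" for A
    proof (rule ccontr)
      assume n: "\<not> (\<exists>q\<in>K. A \<in> q)"
      have "\<forall>q\<in>K. -A \<in> q"
      proof
        fix q assume "q \<in> K"
        then have "ult q" "A \<notin> q" using clK n unfolding cl_def by auto
        then show "-A \<in> q" using ult_compl[of q A] by blast
      qed
      then have "-A \<in> F" unfolding F_def using KK by blast
      then have "-A \<in> U" using U(2) by blast
      then show False using that ult_compl[OF U(1)] by blast
    qed
    then show ?thesis using clK U(1) unfolding cl_def by blast
  qed
  then show ?thesis using U(1) by blast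
qed



definition HH :: "nat set set set" where "HH = {p. ult p \<and> (\<forall>n. {m. n \<le> m} \<in> p)}"
definition sg :: "nat set set set \<Rightarrow> bool" where "sg K \<longleftrightarrow> (\<forall>p\<in>K. \<forall>q\<in>K. uplus p q \<in> K)"

lemma cl_HH: "cl HH"
  unfolding cl_def
proof (intro conjI allI impI ballI)
  fix q assume "q \<in> HH" then show "ult q" unfolding HH_def by simp
next
  fix r assume r: "ult r" "\<forall>A\<in>r. \<exists>q\<in>HH. A \<in> q"
  have "{m. n \<le> m} \<in> r" for n
  proof (rule ccontr)
    assume "{m. n \<le> m} \<notin> r"
    then have "- {m. n \<le> m} \<in> r" using ult_compl[OF r(1)] by blast
    then obtain q where "q \<in> HH" "- {m. n \<le> m} \<in> q" using r(2) by blast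
    then have "ult q" "{m. n \<le> m} \<in> q" unfolding HH_def by auto
    then show False using \<open>- {m. n \<le> m} \<in> q\<close> ult_compl[of q "{m. n \<le> m}"] by blast
  qed
  then show "r \<in> HH" using r(1) unfolding HH_def by simp
qed

lemma sg_HH: "sg HH"
  unfolding sg_def
proof (intro ballI)
  fix p q assume "p \<in> HH" "q \<in> HH"
  then have u: "ult p" "ult q" "\<And>n. {m. n \<le> m} \<in> p" "\<And>n. {m. n \<le> m} \<in> q" unfolding HH_def by auto
  have "{m. n \<le> m} \<in> uplus p q" for n
  proof -
    have "sh {m. n \<le> m} k \<in> q" for k
    proof -
      have "{m. n \<le> m} \<subseteq> sh {m. n \<le> m} k" by (auto simp: sh_def)
      then show ?thesis using ultD(3)[OF u(2) u(4)[of n]] by blast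
    qed
    then have "{k. sh {m. n \<le> m} k \<in> q} = UNIV" by auto
    then show ?thesis unfolding uplus_def using ultD(1)[OF u(1)] by simp
  qed
  then show "uplus p q \<in> HH" unfolding HH_def using uplus_ult[OF u(1,2)] by simp
qed

lemma HH_ne: "HH \<noteq> {}"
proof -
  have "fip (range (\<lambda>n. {m::nat. n \<le> m}))" unfolding fip_def
  proof (intro allI impI)
    fix H assume "finite H" "H \<subseteq> range (\<lambda>n. {m::nat. n \<le> m})"
    then obtain N where N: "finite N" "H = (\<lambda>n. {m::nat. n \<le> m}) ` N"
      using finite_subset_image[of H "\<lambda>n. {m::nat. n \<le> m}" UNIV] by blast
    have "\<Sum>N \<in> \<Inter>H" using N member_le_sum[of _ N id] by auto
    then show "\<Inter>H \<noteq> {}" by blast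
  qed
  then obtain U where "ult U" "range (\<lambda>n. {m::nat. n \<le> m}) \<subseteq> U" using fip_extend by blast
  then have "U \<in> HH" unfolding HH_def by auto
  then show ?thesis by blast
qed

lemma cl_Inter: assumes "\<forall>K\<in>CC. cl K" "CC \<noteq> {}" shows "cl (\<Inter>CC)"
  unfolding cl_def
proof (intro conjI allI impI ballI)
  fix q assume "q \<in> \<Inter>CC"
  then show "ult q" using assms unfolding cl_def by blast
next
  fix r assume r: "ult r" "\<forall>A\<in>r. \<exists>q\<in>\<Inter>CC. A \<in> q"
  show "r \<in> \<Inter>CC"
  proof
    fix K assume "K \<in> CC"
    then have "cl K" using assms by blast
    moreover have "\<forall>A\<in>r. \<exists>q\<in>K. A \<in> q" using r(2) \<open>K \<in> CC\<close> by blast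
    ultimately show "r \<in> K" using r(1) unfolding cl_def by blast
  qed
qed

lemma cl_basic: assumes "cl M" shows "cl {q\<in>M. B \<in> q}"
  unfolding cl_def
proof (intro conjI allI impI ballI)
  fix q assume "q \<in> {q\<in>M. B \<in> q}" then show "ult q" using assms unfolding cl_def by blast
next
  fix r assume r: "ult r" "\<forall>A\<in>r. \<exists>q\<in>{q\<in>M. B \<in> q}. A \<in> q"
  have "\<forall>A\<in>r. \<exists>q\<in>M. A \<in> q" using r(2) by blast
  then have "r \<in> M" using assms r(1) unfolding cl_def by blast
  moreover have "B \<in> r"
  proof (rule ccontr)
    assume "B \<notin> r" then have "-B \<in> r" using ult_compl[OF r(1)] by blast
    then obtain q where "q \<in> M" "B \<in> q" "-B \<in> q" using r(2) by blast
    then have "ult q" using assms unfolding cl_def by blast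
    then show False using \<open>B \<in> q\<close> \<open>-B \<in> q\<close> ult_compl[of q B] by blast
  qed
  ultimately show "r \<in> {q\<in>M. B \<in> q}" by simp
qed

definition SG where "SG = {K. cl K \<and> K \<noteq> {} \<and> K \<subseteq> HH \<and> sg K}"

lemma minimal_SG: "\<exists>M\<in>SG. \<forall>K\<in>SG. K \<subseteq> M \<longrightarrow> K = M"
proof -
  have HS: "HH \<in> SG" unfolding SG_def using cl_HH HH_ne sg_HH by simp
  have claim: "\<exists>U\<in>uminus ` SG. \<forall>X\<in>C. X \<subseteq> U" if C: "C \<in> chains (uminus ` SG)" for C
  proof (cases "C = {}")
    case True then show ?thesis using HS by blast
  next
    case False
    define D where "D = uminus ` C"
    have CS: "C \<subseteq> uminus ` SG" using C unfolding chains_def by blast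
    have DS: "D \<subseteq> SG"
    proof
      fix K assume "K \<in> D"
      then obtain X where X: "X \<in> C" "K = -X" unfolding D_def by blast
      then obtain K' where "K' \<in> SG" "X = -K'" using CS by blast
      then show "K \<in> SG" using X by simp
    qed
    have SGD: "cl K \<and> K \<noteq> {} \<and> K \<subseteq> HH \<and> sg K" if "K \<in> D" for K
      using DS that unfolding SG_def by blast
    have chC: "\<forall>X\<in>C. \<forall>Y\<in>C. X \<subseteq> Y \<or> Y \<subseteq> X" using C unfolding chains_def chain_subset_def by blast
    have chD0: "\<forall>X\<in>D. \<forall>Y\<in>D. X \<subseteq> Y \<or> Y \<subseteq> X"
    proof (intro ballI)
      fix X Y assume "X \<in> D" "Y \<in> D"
      then obtain X' Y' where "X' \<in> C" "Y' \<in> C" "X = -X'" "Y = -Y'" unfolding D_def by blast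
      then show "X \<subseteq> Y \<or> Y \<subseteq> X" using chC by blast
    qed
    then have "chain\<^sub>\<subseteq> D" unfolding chain_subset_def by blast
    then have chD: "subset.chain UNIV D" unfolding chain_subset_alt_def .
    have Dne: "D \<noteq> {}" using False unfolding D_def by auto
    have clD: "\<forall>K\<in>D. cl K" using SGD by blast
    have "cl (\<Inter>D)" using cl_Inter[OF clD Dne] .
    moreover have "\<Inter>D \<noteq> {}"
    proof -
      have "\<forall>GG. finite GG \<longrightarrow> GG \<subseteq> D \<longrightarrow> GG \<noteq> {} \<longrightarrow> \<Inter>GG \<noteq> {}"
      proof (intro allI impI)
        fix GG assume GG: "finite GG" "GG \<subseteq> D" "GG \<noteq> {}"
        then have "chain\<^sub>\<subseteq> GG" using chD0 unfolding chain_subset_def by blast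
        then have "subset.chain UNIV GG" unfolding chain_subset_alt_def .
        then have "\<Inter>GG \<in> GG" using Inter_in_chain GG by blast
        then have "\<Inter>GG \<in> D" using GG(2) by blast
        then show "\<Inter>GG \<noteq> {}" using SGD by blast
      qed
      then obtain U where "ult U" "\<forall>K\<in>D. U \<in> K" using compact[OF clD] by blast
      then show ?thesis by blast
    qed
    moreover have "\<Inter>D \<subseteq> HH"
    proof -
      obtain K0 where "K0 \<in> D" using Dne by blast
      then have "\<Inter>D \<subseteq> K0" "K0 \<subseteq> HH" using SGD by auto
      then show ?thesis by blast
    qed
    moreover have "sg (\<Inter>D)" unfolding sg_def
    proof (intro ballI)
      fix p q assume pq: "p \<in> \<Inter>D" "q \<in> \<Inter>D"
      show "uplus p q \<in> \<Inter>D"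
      proof
        fix K assume "K \<in> D"
        then have "sg K" "p \<in> K" "q \<in> K" using SGD pq by auto
        then show "uplus p q \<in> K" unfolding sg_def by blast
      qed
    qed
    ultimately have "\<Inter>D \<in> SG" unfolding SG_def by blast
    moreover have "\<forall>X\<in>C. X \<subseteq> - \<Inter>D"
    proof
      fix X assume "X \<in> C"
      then have "-X \<in> D" unfolding D_def by blast
      then have "\<Inter>D \<subseteq> -X" by blast
      then show "X \<subseteq> - \<Inter>D" by blast
    qed
    moreover have "- \<Inter>D \<in> uminus ` SG" using \<open>\<Inter>D \<in> SG\<close> by blast
    ultimately show ?thesis by blast
  qed
  have "\<exists>M'\<in>uminus ` SG. \<forall>X\<in>uminus ` SG. M' \<subseteq> X \<longrightarrow> X = M'"
    by (rule Zorn_Lemma2, rule ballI, rule claim, assumption)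
  then obtain M' where M'1: "M' \<in> uminus ` SG" and M'2': "\<forall>X\<in>uminus ` SG. M' \<subseteq> X \<longrightarrow> X = M'"
    by (rule bexE)
  note M'2 = M'2'[rule_format]
  from M'1 obtain M where M: "M' = - M" "M \<in> SG" by (rule imageE)
  have "\<forall>K\<in>SG. K \<subseteq> M \<longrightarrow> K = M"
  proof (intro ballI impI)
    fix K assume K: "K \<in> SG" "K \<subseteq> M"
    have "-K \<in> uminus ` SG" using K(1) by (rule imageI)
    moreover have "M' \<subseteq> -K" using K(2) M(1) by (simp add: Compl_subset_Compl_iff)
    ultimately have "-K = M'" by (rule M'2)
    then show "K = M" using M(1) by simp
  qed
  then show ?thesis by (rule bexI[OF _ M(2)])
qed

lemma idempotent: "\<exists>p. ult p \<and> (\<forall>n. {m. n \<le> m} \<in> p) \<and> uplus p p = p"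
proof -
  obtain M where M: "M \<in> SG" "\<And>K. K \<in> SG \<Longrightarrow> K \<subseteq> M \<Longrightarrow> K = M" using minimal_SG by blast
  have clM: "cl M" and neM: "M \<noteq> {}" and MH: "M \<subseteq> HH" and sgM: "sg M" using M(1) unfolding SG_def by auto
  have ultM: "\<And>q. q \<in> M \<Longrightarrow> ult q" using clM unfolding cl_def by blast
  obtain p where pM: "p \<in> M" using neM by blast
  have up: "ult p" using ultM pM .
  define M2 where "M2 = (\<lambda>q. uplus q p) ` M"
  have "cl M2" unfolding cl_def
  proof (intro conjI allI impI ballI)
    fix q assume "q \<in> M2" then show "ult q" unfolding M2_def using uplus_ult ultM up by blast
  next
    fix r assume r: "ult r" "\<forall>A\<in>r. \<exists>q\<in>M2. A \<in> q"
    define S where "S = (\<lambda>A. {q\<in>M. {n. sh A n \<in> p} \<in> q})"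
    define KK where "KK = S ` r"
    have "\<forall>K\<in>KK. cl K" unfolding KK_def S_def using cl_basic[OF clM] by blast
    moreover have "\<forall>GG. finite GG \<longrightarrow> GG \<subseteq> KK \<longrightarrow> GG \<noteq> {} \<longrightarrow> \<Inter>GG \<noteq> {}"
    proof (intro allI impI)
      fix GG assume GG: "finite GG" "GG \<subseteq> KK" "GG \<noteq> {}"
      then obtain As where As: "finite As" "As \<subseteq> r" "GG = S ` As" unfolding KK_def
        using finite_subset_image[of GG S r] by blast
      have "\<Inter>As \<in> r" using ult_Inter[OF r(1) As(1,2)] .
      then obtain q where q: "q \<in> M" "\<Inter>As \<in> uplus q p" using r(2) unfolding M2_def by blast
      have uq: "ult (uplus q p)" using uplus_ult ultM[OF q(1)] up by blast
      have "q \<in> S A" if "A \<in> As" for A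
      proof -
        have "A \<in> uplus q p" using ultD(3)[OF uq q(2)] that by blast
        then show ?thesis unfolding S_def uplus_def using q(1) by simp
      qed
      then show "\<Inter>GG \<noteq> {}" using As(3) by blast
    qed
    ultimately obtain U where U: "ult U" "\<forall>K\<in>KK. U \<in> K" using compact by blast
    have "U \<in> S UNIV" using U(2) ultD(1)[OF r(1)] unfolding KK_def by blast
    then have UM: "U \<in> M" unfolding S_def by blast
    have "r \<subseteq> uplus U p"
    proof
      fix A assume "A \<in> r" then have "U \<in> S A" using U(2) unfolding KK_def by blast
      then show "A \<in> uplus U p" unfolding S_def uplus_def by simp
    qed
    then have "r = uplus U p" by (rule ult_sub_eq[OF r(1) uplus_ult[OF ultM[OF UM] up]])
    then show "r \<in> M2" unfolding M2_def using UM by blast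
  qed
  moreover have "M2 \<subseteq> M" unfolding M2_def using sgM pM unfolding sg_def by blast
  moreover have "M2 \<noteq> {}" unfolding M2_def using neM by blast
  moreover have "sg M2" unfolding sg_def M2_def
  proof (intro ballI)
    fix x y assume "x \<in> (\<lambda>q. uplus q p) ` M" "y \<in> (\<lambda>q. uplus q p) ` M"
    then obtain q q' where "q \<in> M" "q' \<in> M" "x = uplus q p" "y = uplus q' p" by blast
    then have "uplus x y = uplus (uplus (uplus q p) q') p" by (simp add: uplus_assoc)
    moreover have "uplus (uplus q p) q' \<in> M" using sgM \<open>q \<in> M\<close> \<open>q' \<in> M\<close> pM unfolding sg_def by blast
    ultimately show "uplus x y \<in> (\<lambda>q. uplus q p) ` M" by blast
  qed
  ultimately have "M2 \<in> SG" unfolding SG_def using MH by auto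
  then have "M2 = M" using M(2) \<open>M2 \<subseteq> M\<close> by blast
  then have "p \<in> (\<lambda>q. uplus q p) ` M" using pM unfolding M2_def by simp
  then obtain q0 where q0: "q0 \<in> M" "p = uplus q0 p" by (rule imageE)
  define K where "K = {q\<in>M. uplus q p = p}"
  have "cl K" unfolding cl_def
  proof (intro conjI allI impI ballI)
    fix q assume "q \<in> K" then show "ult q" unfolding K_def using ultM by blast
  next
    fix r assume r: "ult r" "\<forall>A\<in>r. \<exists>q\<in>K. A \<in> q"
    have "\<forall>A\<in>r. \<exists>q\<in>M. A \<in> q" using r(2) unfolding K_def by blast
    then have "r \<in> M" using clM r(1) unfolding cl_def by blast
    have "p \<subseteq> uplus r p"
    proof
      fix A assume "A \<in> p"
      show "A \<in> uplus r p" unfolding uplus_def mem_Collect_eq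
      proof (rule ccontr)
        assume "{n. sh A n \<in> p} \<notin> r"
        then have "- {n. sh A n \<in> p} \<in> r" using ult_compl[OF r(1)] by blast
        then obtain q where q: "q \<in> K" "- {n. sh A n \<in> p} \<in> q" using r(2) by blast
        then have "ult q" "uplus q p = p" unfolding K_def using ultM by auto
        then have "A \<notin> uplus q p" using q(2) ult_compl[of q "{n. sh A n \<in> p}"] unfolding uplus_def by blast
        then show False using \<open>A \<in> p\<close> \<open>uplus q p = p\<close> by simp
      qed
    qed
    then have "p = uplus r p" by (rule ult_sub_eq[OF up uplus_ult[OF r(1) up]])
    then show "r \<in> K" unfolding K_def using \<open>r \<in> M\<close> by simp
  qed
  moreover have "K \<noteq> {}" using q0 unfolding K_def by blast
  moreover have "K \<subseteq> M" unfolding K_def by blast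
  moreover have "sg K" unfolding sg_def K_def
  proof (intro ballI)
    fix q q' assume "q \<in> {q\<in>M. uplus q p = p}" "q' \<in> {q\<in>M. uplus q p = p}"
    then show "uplus q q' \<in> {q\<in>M. uplus q p = p}"
      using sgM unfolding sg_def by (simp add: uplus_assoc)
  qed
  ultimately have "K \<in> SG" unfolding SG_def using MH by auto
  then have "K = M" using M(2) \<open>K \<subseteq> M\<close> by blast
  then have "uplus p p = p" using pM unfolding K_def by blast
  moreover have "\<forall>n. {m. n \<le> m} \<in> p" using MH pM unfolding HH_def by blast
  ultimately show ?thesis using up by blast
qed



lemma ult_finite_cover:
  assumes "ult p" "finite V" "\<Union>V = UNIV" shows "\<exists>A\<in>V. A \<in> p"
proof (rule ccontr)
  assume "\<not> (\<exists>A\<in>V. A \<in> p)"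
  then have "uminus ` V \<subseteq> p" using ult_compl[OF assms(1)] by blast
  then have "\<Inter>(uminus ` V) \<in> p" using ult_Inter[OF assms(1)] assms(2) by blast
  moreover have "\<Inter>(uminus ` V) = {}" using assms(3) by blast
  ultimately show False using ultD(2)[OF assms(1)] by simp
qed

primrec seqs :: "(nat list \<Rightarrow> nat) \<Rightarrow> nat \<Rightarrow> nat list" where
  "seqs f 0 = []"
| "seqs f (Suc k) = seqs f k @ [f (seqs f k)]"

lemma seqs_len: "length (seqs f k) = k" by (induction k) auto

lemma seqs_nth: "i < k \<Longrightarrow> seqs f k ! i = seqs f (Suc i) ! i"
proof (induction k)
  case 0 then show ?case by simp
next
  case (Suc k)
  show ?case
  proof (cases "i < k")
    case True then show ?thesis using Suc by (simp add: nth_append seqs_len)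
  next
    case False then have "i = k" using Suc by simp
    then show ?thesis by simp
  qed
qed

lemma hindman:
  fixes c :: "nat \<Rightarrow> 'b" assumes "finite (range c)"
  shows "\<exists>(x::nat \<Rightarrow> nat) col. (\<forall>i. x i \<ge> 1) \<and> (\<forall>F. finite F \<longrightarrow> F \<noteq> {} \<longrightarrow> c (sum x F) = col)"
proof -
  obtain p where p: "ult p" "\<And>n. {m. n \<le> m} \<in> p" "uplus p p = p" using idempotent by blast
  have "\<exists>A\<in>(\<lambda>v. c -` {v}) ` range c. A \<in> p"
    by (rule ult_finite_cover[OF p(1)]) (use assms in auto)
  then obtain v where Ap: "c -` {v} \<in> p" by blast
  define A where "A = c -` {v}"
  define As where "As = {n\<in>A. sh A n \<in> p}"
  have Asp: "As \<in> p"
  proof -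
    have "A \<in> uplus p p" using Ap p(3) unfolding A_def by simp
    then have "{n. sh A n \<in> p} \<in> p" unfolding uplus_def by simp
    then have "A \<inter> {n. sh A n \<in> p} \<in> p" using ultD(4)[OF p(1)] Ap unfolding A_def by blast
    moreover have "A \<inter> {n. sh A n \<in> p} = As" unfolding As_def by blast
    ultimately show ?thesis by simp
  qed
  have shAs: "sh As n \<in> p" if "n \<in> As" for n
  proof -
    have "sh A n \<in> p" using that unfolding As_def by simp
    then have "sh A n \<in> uplus p p" using p(3) by simp
    then have "{m. sh (sh A n) m \<in> p} \<in> p" unfolding uplus_def by simp
    moreover have "sh (sh A n) m = sh A (m + n)" for m by (auto simp: sh_def ac_simps)
    ultimately have "{m. sh A (m + n) \<in> p} \<in> p" by simp
    then have "sh A n \<inter> {m. sh A (m + n) \<in> p} \<in> p" using ultD(4)[OF p(1)] \<open>sh A n \<in> p\<close> by blast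
    moreover have "sh A n \<inter> {m. sh A (m + n) \<in> p} = sh As n" unfolding As_def sh_def by auto
    ultimately show ?thesis by simp
  qed
  define good where "good = (\<lambda>L x. 1 \<le> x \<and> (\<forall>F\<subseteq>{..<length L}. x + (\<Sum>i\<in>F. L ! i) \<in> As))"
  define inv where "inv = (\<lambda>L. \<forall>F\<subseteq>{..<length L}. F \<noteq> {} \<longrightarrow> (\<Sum>i\<in>F. L ! i) \<in> As)"
  have ex_good: "\<exists>x. good L x" if "inv L" for L
  proof -
    define Ss where "Ss = insert {m. 1 \<le> m} ((\<lambda>F. sh As (\<Sum>i\<in>F. L ! i)) ` Pow {..<length L})"
    have "Ss \<subseteq> p"
    proof
      fix S assume "S \<in> Ss"
      then consider "S = {m. 1 \<le> m}" | F where "F \<subseteq> {..<length L}" "S = sh As (\<Sum>i\<in>F. L ! i)"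
        unfolding Ss_def by blast
      then show "S \<in> p"
      proof cases
        case 1 then show ?thesis using p(2) by simp
      next
        case 2
        show ?thesis
        proof (cases "F = {}")
          case True then have "S = As" using 2 by (simp add: sh_def)
          then show ?thesis using Asp by simp
        next
          case False then have "(\<Sum>i\<in>F. L ! i) \<in> As" using that 2 unfolding inv_def by blast
          then show ?thesis using shAs 2 by simp
        qed
      qed
    qed
    moreover have "finite Ss" unfolding Ss_def by simp
    ultimately have "\<Inter>Ss \<in> p" using ult_Inter[OF p(1)] by blast
    then obtain x where "x \<in> \<Inter>Ss" using ultD(2)[OF p(1)] by (metis ex_in_conv)
    then have "good L x" unfolding good_def Ss_def by (auto simp: sh_def ac_simps)
    then show ?thesis by blast
  qed
  define nxt where "nxt = (\<lambda>L. SOME x. good L x)"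
  have inv_step: "inv (L @ [x])" if "inv L" "good L x" for L x
    unfolding inv_def
  proof (intro allI impI)
    fix F assume F: "F \<subseteq> {..<length (L @ [x])}" "F \<noteq> {}"
    have eq: "(\<Sum>i\<in>G. (L @ [x]) ! i) = (\<Sum>i\<in>G. L ! i)" if "G \<subseteq> {..<length L}" for G
      using that by (intro sum.cong) (auto simp: nth_append)
    show "(\<Sum>i\<in>F. (L @ [x]) ! i) \<in> As"
    proof (cases "length L \<in> F")
      case False
      then have "F \<subseteq> {..<length L}" using F(1) by (auto simp: less_Suc_eq)
      then show ?thesis using eq that(1) F(2) unfolding inv_def by simp
    next
      case True
      have G: "F - {length L} \<subseteq> {..<length L}" using F(1) by auto
      have fin: "finite F" using F(1) finite_subset by blast
      have "(\<Sum>i\<in>F. (L @ [x]) ! i) = (L @ [x]) ! length L + (\<Sum>i\<in>F - {length L}. (L @ [x]) ! i)"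
        using True fin by (simp add: sum.remove)
      also have "\<dots> = x + (\<Sum>i\<in>F - {length L}. L ! i)" using eq[OF G] by simp
      finally show ?thesis using that(2) G unfolding good_def by simp
    qed
  qed
  have gen: "good L (nxt L)" if "inv L" for L
    unfolding nxt_def using someI_ex[OF ex_good[OF that]] by simp
  have inv_seqs: "inv (seqs nxt k) \<and> (k > 0 \<longrightarrow> good (seqs nxt (k - 1)) (seqs nxt k ! (k - 1)))" for k
  proof (induction k)
    case 0 then show ?case unfolding inv_def by simp
  next
    case (Suc k)
    then have i: "inv (seqs nxt k)" by simp
    have g: "good (seqs nxt k) (nxt (seqs nxt k))" by (rule gen[OF i])
    then show ?case using inv_step[OF i g] by (simp add: nth_append seqs_len)
  qed
  define x where "x = (\<lambda>i. seqs nxt (Suc i) ! i)"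
  have "\<forall>i. x i \<ge> 1" using inv_seqs unfolding x_def good_def by (metis diff_Suc_1 zero_less_Suc)
  moreover have "c (sum x F) = v" if "finite F" "F \<noteq> {}" for F
  proof -
    define k where "k = Suc (Max F)"
    have Fk: "F \<subseteq> {..<length (seqs nxt k)}" using that by (auto simp: seqs_len k_def le_imp_less_Suc)
    have "sum x F = (\<Sum>i\<in>F. seqs nxt k ! i)"
    proof (rule sum.cong[OF refl])
      fix i assume "i \<in> F"
      then have "i < k" using Fk by (auto simp: seqs_len)
      then show "x i = seqs nxt k ! i" unfolding x_def by (rule seqs_nth[symmetric])
    qed
    also have "\<dots> \<in> As" using inv_seqs[of k] Fk that(2) unfolding inv_def by blast
    finally show ?thesis unfolding As_def A_def by simp
  qed
  ultimately show ?thesis by blast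
qed



lemma nth_concat_replicate:
  "k < n * length w \<Longrightarrow> concat (replicate n w) ! k = w ! (k mod length w)"
proof (induction n arbitrary: k)
  case 0 then show ?case by simp
next
  case (Suc n)
  show ?case
  proof (cases "k < length w")
    case True then show ?thesis by (simp add: nth_append)
  next
    case False
    then have "k - length w < n * length w" using Suc.prems by auto
    then have "concat (replicate n w) ! (k - length w) = w ! ((k - length w) mod length w)" using Suc.IH by blast
    moreover have "(k - length w) mod length w = k mod length w" using False by (simp add: le_mod_geq)
    ultimately show ?thesis using False by (simp add: nth_append)
  qed
qed

lemma concat_map_rep:
  "concat (map (\<lambda>i. concat (replicate (x i) w)) ms) = concat (replicate (sum_list (map x ms)) w)"
  by (induction ms) (auto simp: replicate_add)

lemma length_concat_rep[simp]: "length (concat (replicate n w)) = n * length w"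
  by (induction n) auto

lemma set_concat_rep: "set (concat (replicate n w)) \<subseteq> set w" by auto

lemma ultra_rep:
  assumes col: "\<And>F. finite F \<Longrightarrow> F \<noteq> {} \<Longrightarrow> \<phi> (concat (replicate (sum x F) w)) = c" and "c \<in> C"
  shows "ultra_mono \<phi> C (\<lambda>i. concat (replicate (x i) w))"
  unfolding ultra_mono_def
proof (rule bexI[OF _ \<open>c \<in> C\<close>], intro allI impI)
  fix ns ms :: "nat list" assume ns: "ns \<noteq> []" "sorted_wrt (<) ns" and ms: "mset ms = mset ns"
  have "distinct ns" using ns(2) strict_sorted_iff by blast
  then have "distinct ms" using mset_eq_imp_distinct_iff[OF ms] by simp
  have "set ms = set ns" using ms by (metis set_mset_mset)
  then have "set ms \<noteq> {}" using ns(1) by simp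
  have "concat (map (\<lambda>i. concat (replicate (x i) w)) ms) = concat (replicate (sum x (set ms)) w)"
    unfolding concat_map_rep sum_list_distinct_conv_sum_set[OF \<open>distinct ms\<close>] ..
  then show "\<phi> (concat (map (\<lambda>i. concat (replicate (x i) w)) ms)) = c"
    using col[OF finite_set \<open>set ms \<noteq> {}\<close>] by simp
qed

theorem theorem3p5:
  fixes A :: "'a set" and C :: "'c set" and \<phi> :: "'a list \<Rightarrow> 'c" and u :: "'a list"
  assumes "A \<noteq> {}"
    and "finite C"
    and "\<forall>w\<in>plus_words A. \<phi> w \<in> C"
    and "u \<in> plus_words A"
  shows "\<exists>V. is_factorization A (omega_pow u) V \<and> ultra_mono \<phi> C V
             \<and> shift_invariant \<phi> C (omega_pow u) V"
proof -
  define L where "L = length u"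
  have uA: "u \<noteq> []" "set u \<subseteq> A" using assms(4) unfolding plus_words_def by auto
  then have L0: "L > 0" unfolding L_def by simp
  have pw: "concat (replicate n (rotate r u)) \<in> plus_words A" if "n \<ge> 1" for n r
  proof -
    have "concat (replicate n (rotate r u)) \<noteq> []" using that uA(1) by (cases n) auto
    moreover have "set (concat (replicate n (rotate r u))) \<subseteq> A" using uA(2) set_concat_rep[of n "rotate r u"] by simp
    ultimately show ?thesis unfolding plus_words_def by simp
  qed
  define c where "c = (\<lambda>n. if n = 0 then [] else map (\<lambda>r. \<phi> (concat (replicate n (rotate r u)))) [0..<L])"
  have "range c \<subseteq> insert [] {xs. set xs \<subseteq> C \<and> length xs = L}"
  proof
    fix y assume "y \<in> range c"
    then obtain n where "y = c n" by blast
    then show "y \<in> insert [] {xs. set xs \<subseteq> C \<and> length xs = L}"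
      using pw assms(3) unfolding c_def by (cases "n = 0") auto
  qed
  then have "finite (range c)" using finite_lists_length_eq[OF assms(2)] finite_subset by blast
  then obtain x :: "nat \<Rightarrow> nat" and col where x: "\<And>i. x i \<ge> 1" and xc: "\<And>F::nat set. finite F \<Longrightarrow> F \<noteq> {} \<Longrightarrow> c (sum x F) = col"
    using hindman by blast
  have sum_pos: "sum x F \<noteq> 0" if "finite F" "F \<noteq> {}" for F
  proof -
    obtain i where "i \<in> F" using \<open>F \<noteq> {}\<close> by blast
    then have "x i \<le> sum x F" using that member_le_sum[of i F x] by simp
    then show ?thesis using x[of i] by simp
  qed
  have colr: "\<phi> (concat (replicate (sum x F) (rotate r u))) = col ! r" if "finite F" "F \<noteq> {}" "r < L" for F r
  proof -
    have "col = map (\<lambda>r. \<phi> (concat (replicate (sum x F) (rotate r u)))) [0..<L]"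
      using xc[OF that(1,2)] sum_pos[OF that(1,2)] unfolding c_def by simp
    then show ?thesis using that(3) by simp
  qed
  have colC: "col ! r \<in> C" if "r < L" for r
  proof -
    have "col ! r = \<phi> (concat (replicate (sum x {0}) (rotate r u)))" using colr[of "{0}" r] that by simp
    then show ?thesis using assms(3) pw[of "sum x {0}" r] x[of 0] by simp
  qed
  define W where "W = (\<lambda>r i. concat (replicate (x i) (rotate r u)))"
  have umW: "ultra_mono \<phi> C (W r)" if "r < L" for r
    unfolding W_def by (rule ultra_rep[where x=x and \<phi>=\<phi> and w="rotate r u" and c="col ! r" and C=C, OF colr[OF _ _ that] colC[OF that]])
  define V where "V = W 0"
  have lenV: "length (V i) = x i * L" for i unfolding V_def W_def L_def by simp
  have starts: "starts V i = L * sum x {..<i}" for i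
    unfolding starts_def lenV by (simp add: sum_distrib_left mult.commute)
  have fact: "is_factorization A (omega_pow u) V"
    unfolding is_factorization_def
  proof (intro conjI allI impI)
    fix i show "V i \<in> plus_words A" unfolding V_def W_def using pw[OF x[of i], of 0] by simp
  next
    fix i k assume k: "k < length (V i)"
    then have "V i ! k = u ! (k mod L)" unfolding V_def W_def L_def
      using nth_concat_replicate[of k "x i" u] by (simp add: lenV[unfolded V_def W_def L_def])
    moreover have "omega_pow u (starts V i + k) = u ! (k mod L)"
      unfolding omega_pow_def starts L_def[symmetric] by simp
    ultimately show "omega_pow u (starts V i + k) = V i ! k" by simp
  qed
  have ind: "induced_fact V j (omega_pow u) = W (j mod L)" for j
  proof
    fix i
    show "induced_fact V j (omega_pow u) i = W (j mod L) i"
    proof (rule nth_equalityI)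
      show "length (induced_fact V j (omega_pow u) i) = length (W (j mod L) i)"
        unfolding induced_fact_def W_def using lenV[of i] L_def by simp
    next
      fix k assume "k < length (induced_fact V j (omega_pow u) i)"
      then have k: "k < x i * L" unfolding induced_fact_def using lenV by simp
      have "induced_fact V j (omega_pow u) i ! k = u ! ((L * sum x {..<i} + k + j) mod L)"
        unfolding induced_fact_def shift_def omega_pow_def starts using k lenV L_def by (simp add: ac_simps)
      also have "\<dots> = u ! ((k + j) mod L)"
      proof -
        have "L * sum x {..<i} + k + j = (k + j) + L * sum x {..<i}" by simp
        then show ?thesis by (metis mod_mult_self2)
      qed
      also have "\<dots> = u ! ((j mod L + k mod L) mod L)" by (simp add: mod_add_eq ac_simps)
      also have "\<dots> = rotate (j mod L) u ! (k mod L)"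
        using nth_rotate[of "k mod L" u "j mod L"] L0 L_def by simp
      also have "\<dots> = W (j mod L) i ! k" unfolding W_def
        using nth_concat_replicate[of k "x i" "rotate (j mod L) u"] k L_def by simp
      finally show "induced_fact V j (omega_pow u) i ! k = W (j mod L) i ! k" .
    qed
  qed
  have "ultra_mono \<phi> C V" unfolding V_def using umW L0 by simp
  moreover have "shift_invariant \<phi> C (omega_pow u) V"
    unfolding shift_invariant_def ind using umW L0 by simp
  ultimately show ?thesis using fact by blast
qed


end
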